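(* Let $\mathfrak g=\mathfrak r_3$ (basis $\{e_1,e_2,e_3\}$, nonzero brackets $[e_1,e_2]=e_2+e_3$, $[e_1,e_3]=e_3$). Then the action of $\mathbb R^\times\mathrm{Aut}(\mathfrak g)$ on $\mathrm{GL}_3(\mathbb R)/\mathrm{O}(3)$ has no minimal orbits (with respect to the natural Riemannian metric).
   Context: Identify $\mathfrak g\cong\mathbb R^3$ via the basis. $\mathrm{GL}_3(\mathbb R)/\mathrm{O}(3)$ is identified with the set of inner products on $\mathfrak g$ via $g.\langle\cdot,\cdot\rangle=\langle g^{-1}\cdot,g^{-1}\cdot\rangle$. The natural Riemannian metric is the $\mathrm{GL}_3(\mathbb R)$-invariant metric corresponding to $\langle X,Y\rangle=\mathrm{tr}(XY)$ on $\mathrm{sym}(3)$ (reductive complement $\mathfrak{gl}_3=\mathfrak o(3)\oplus\mathrm{sym}(3)$). $\mathbb R^\times\mathrm{Aut}(\mathfrak g)=\{c\varphi:c\ne0,\ \varphi\in\mathrm{Aut}(\mathfrak g)\}\subset\mathrm{GL}_3(\mathbb R)$ acts by restriction. An orbit is minimal if its mean curvature vector vanishes identically. *)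

theory Defs
  imports "HOL-Analysis.Analysis"
begin

type_synonym mat3 = "real^3^3"

text \<open>g = R^3 with basis e1 = axis 1 1, e2 = axis 2 1, e3 = axis 3 1; bracket extended
  bilinearly and antisymmetrically from [e1,e2] = e2 + e3, [e1,e3] = e3, [e2,e3] = 0.\<close>
definition r3_bracket :: "real^3 \<Rightarrow> real^3 \<Rightarrow> real^3" where
  "r3_bracket x y =
     (let a = x$1 * y$2 - x$2 * y$1; b = x$1 * y$3 - x$3 * y$1
      in vector [0, a, a + b])"

definition r3_aut :: "mat3 \<Rightarrow> bool" where
  "r3_aut phi \<longleftrightarrow> invertible phi \<and>
     (\<forall>x y. phi *v r3_bracket x y = r3_bracket (phi *v x) (phi *v y))"

definition RxAut :: "mat3 set" where
  "RxAut = {c *\<^sub>R phi | c phi. c \<noteq> 0 \<and> r3_aut phi}"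

definition lie_alg :: "mat3 set \<Rightarrow> mat3 set" where
  "lie_alg G = {X. \<exists>\<gamma>. (\<forall>t. \<gamma> t \<in> G) \<and> \<gamma> 0 = mat 1 \<and> (\<gamma> has_vector_derivative X) (at 0)}"

section \<open>GL_3(R)/O(3) as the space of inner products (Gram matrices)\<close>

definition sym_mats :: "mat3 set" where
  "sym_mats = {A. transpose A = A}"

definition posdef :: "mat3 \<Rightarrow> bool" where
  "posdef P \<longleftrightarrow> transpose P = P \<and> (\<forall>x. x \<noteq> 0 \<longrightarrow> x \<bullet> (P *v x) > 0)"

text \<open>g.<.,.> = <g^{-1}.,g^{-1}.>: on Gram matrices P \<mapsto> g^{-T} P g^{-1}.\<close>
definition act :: "mat3 \<Rightarrow> mat3 \<Rightarrow> mat3" where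
  "act g P = transpose (matrix_inv g) ** P ** matrix_inv g"

text \<open>The GL_3-invariant metric induced by tr(XY) on sym(3): at the identity the curve
  exp(tX).I = exp(-2tX) has velocity -2X, so g_P(A,B) = (1/4) tr(P^{-1} A P^{-1} B).\<close>
definition metric :: "mat3 \<Rightarrow> mat3 \<Rightarrow> mat3 \<Rightarrow> real" where
  "metric P A B = (1/4) * trace (matrix_inv P ** A ** matrix_inv P ** B)"

definition dmetric :: "mat3 \<Rightarrow> mat3 \<Rightarrow> mat3 \<Rightarrow> mat3 \<Rightarrow> real" where
  "dmetric P A B C = deriv (\<lambda>t. metric (P + t *\<^sub>R A) B C) 0"

text \<open>Christoffel term of the Levi-Civita connection (Koszul formula, flat coordinates on
  sym(3)): nabla_A V = DV(A) + christ P A (V P).\<close>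
definition christ :: "mat3 \<Rightarrow> mat3 \<Rightarrow> mat3 \<Rightarrow> mat3" where
  "christ P A B = (THE Z. Z \<in> sym_mats \<and> (\<forall>C\<in>sym_mats.
      metric P Z C = (1/2) * (dmetric P A B C + dmetric P B A C - dmetric P C A B)))"

definition cov_deriv :: "(mat3 \<Rightarrow> mat3) \<Rightarrow> mat3 \<Rightarrow> mat3 \<Rightarrow> mat3" where
  "cov_deriv V P A = (THE D. (V has_derivative D) (at P)) A + christ P A (V P)"

text \<open>Fundamental (action) vector field of X in gl_3: d/dt|_0 exp(tX).Q.\<close>
definition fund :: "mat3 \<Rightarrow> mat3 \<Rightarrow> mat3" where
  "fund X Q = - (transpose X ** Q + Q ** X)"

definition orbit :: "mat3 set \<Rightarrow> mat3 \<Rightarrow> mat3 set" where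
  "orbit G P = {act g P | g. g \<in> G}"

definition orbit_tangent :: "mat3 set \<Rightarrow> mat3 \<Rightarrow> mat3 set" where
  "orbit_tangent G Q = {fund X Q | X. X \<in> lie_alg G}"

definition normal_proj :: "mat3 \<Rightarrow> mat3 set \<Rightarrow> mat3 \<Rightarrow> mat3" where
  "normal_proj P T N = (THE n. N - n \<in> T \<and> (\<forall>v\<in>T. metric P n v = 0))"

text \<open>Mean curvature vector of the orbit G.Q at Q vanishes: for every orthonormal basis
  X_1^*(Q),...,X_k^*(Q) of the tangent space (X_i in the Lie algebra; the fundamental fields
  are tangent extensions), the normal part of sum_i nabla_{X_i^*} X_i^* is zero.\<close>
definition mean_curv_zero :: "mat3 set \<Rightarrow> mat3 \<Rightarrow> bool" where
  "mean_curv_zero G Q \<longleftrightarrow>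
     (\<forall>xs. set xs \<subseteq> lie_alg G
        \<and> span (set (map (\<lambda>X. fund X Q) xs)) = orbit_tangent G Q
        \<and> (\<forall>i<length xs. \<forall>j<length xs.
             metric Q (fund (xs!i) Q) (fund (xs!j) Q) = (if i = j then 1 else 0))
        \<longrightarrow> normal_proj Q (orbit_tangent G Q)
              (\<Sum>X\<leftarrow>xs. cov_deriv (fund X) Q (fund X Q)) = 0)"

definition minimal_orbit :: "mat3 set \<Rightarrow> mat3 \<Rightarrow> bool" where
  "minimal_orbit G P \<longleftrightarrow> (\<forall>Q\<in>orbit G P. mean_curv_zero G Q)"

end

theory Submission
  imports Defs
begin


definition m3 :: "real \<Rightarrow> real \<Rightarrow> real \<Rightarrow> real \<Rightarrow> real \<Rightarrow> real \<Rightarrow> real \<Rightarrow> real \<Rightarrow> real \<Rightarrow> mat3" where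
  "m3 a11 a12 a13 a21 a22 a23 a31 a32 a33 = (\<chi> i j.
     if i = 1 then (if j = 1 then a11 else if j = 2 then a12 else a13)
     else if i = 2 then (if j = 1 then a21 else if j = 2 then a22 else a23)
     else (if j = 1 then a31 else if j = 2 then a32 else a33))"

lemma m3_nth [simp]:
  "m3 a11 a12 a13 a21 a22 a23 a31 a32 a33 $ 1 $ 1 = a11"
  "m3 a11 a12 a13 a21 a22 a23 a31 a32 a33 $ 1 $ 2 = a12"
  "m3 a11 a12 a13 a21 a22 a23 a31 a32 a33 $ 1 $ 3 = a13"
  "m3 a11 a12 a13 a21 a22 a23 a31 a32 a33 $ 2 $ 1 = a21"
  "m3 a11 a12 a13 a21 a22 a23 a31 a32 a33 $ 2 $ 2 = a22"
  "m3 a11 a12 a13 a21 a22 a23 a31 a32 a33 $ 2 $ 3 = a23"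
  "m3 a11 a12 a13 a21 a22 a23 a31 a32 a33 $ 3 $ 1 = a31"
  "m3 a11 a12 a13 a21 a22 a23 a31 a32 a33 $ 3 $ 2 = a32"
  "m3 a11 a12 a13 a21 a22 a23 a31 a32 a33 $ 3 $ 3 = a33"
  by (simp_all add: m3_def)

lemma m3_eta: "(M::mat3) = m3 (M$1$1) (M$1$2) (M$1$3) (M$2$1) (M$2$2) (M$2$3) (M$3$1) (M$3$2) (M$3$3)"
  by (simp add: vec_eq_iff forall_3)

lemma m3_eq_iff [simp]: "m3 a11 a12 a13 a21 a22 a23 a31 a32 a33 = m3 b11 b12 b13 b21 b22 b23 b31 b32 b33 \<longleftrightarrow>
   a11 = b11 \<and> a12 = b12 \<and> a13 = b13 \<and> a21 = b21 \<and> a22 = b22 \<and> a23 = b23 \<and> a31 = b31 \<and> a32 = b32 \<and> a33 = b33"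
  by (simp add: vec_eq_iff forall_3)

lemma m3_mult [simp]: "m3 a11 a12 a13 a21 a22 a23 a31 a32 a33 ** m3 b11 b12 b13 b21 b22 b23 b31 b32 b33 =
  m3 (a11*b11+a12*b21+a13*b31) (a11*b12+a12*b22+a13*b32) (a11*b13+a12*b23+a13*b33)
     (a21*b11+a22*b21+a23*b31) (a21*b12+a22*b22+a23*b32) (a21*b13+a22*b23+a23*b33)
     (a31*b11+a32*b21+a33*b31) (a31*b12+a32*b22+a33*b32) (a31*b13+a32*b23+a33*b33)"
  by (simp add: vec_eq_iff forall_3 matrix_matrix_mult_def sum_3)

lemma m3_add [simp]: "m3 a11 a12 a13 a21 a22 a23 a31 a32 a33 + m3 b11 b12 b13 b21 b22 b23 b31 b32 b33 =
  m3 (a11+b11) (a12+b12) (a13+b13) (a21+b21) (a22+b22) (a23+b23) (a31+b31) (a32+b32) (a33+b33)"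
  by (simp add: vec_eq_iff forall_3)

lemma m3_diff [simp]: "m3 a11 a12 a13 a21 a22 a23 a31 a32 a33 - m3 b11 b12 b13 b21 b22 b23 b31 b32 b33 =
  m3 (a11-b11) (a12-b12) (a13-b13) (a21-b21) (a22-b22) (a23-b23) (a31-b31) (a32-b32) (a33-b33)"
  by (simp add: vec_eq_iff forall_3)

lemma m3_uminus [simp]: "- m3 a11 a12 a13 a21 a22 a23 a31 a32 a33 =
  m3 (-a11) (-a12) (-a13) (-a21) (-a22) (-a23) (-a31) (-a32) (-a33)"
  by (simp add: vec_eq_iff forall_3)

lemma m3_scaleR [simp]: "c *\<^sub>R m3 a11 a12 a13 a21 a22 a23 a31 a32 a33 =
  m3 (c*a11) (c*a12) (c*a13) (c*a21) (c*a22) (c*a23) (c*a31) (c*a32) (c*a33)"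
  by (simp add: vec_eq_iff forall_3)

lemma m3_transpose [simp]: "transpose (m3 a11 a12 a13 a21 a22 a23 a31 a32 a33) =
  m3 a11 a21 a31 a12 a22 a32 a13 a23 a33"
  by (simp add: vec_eq_iff forall_3 transpose_def)

lemma m3_trace [simp]: "trace (m3 a11 a12 a13 a21 a22 a23 a31 a32 a33) = a11 + a22 + a33"
  by (simp add: trace_def sum_3)

lemma m3_det: "det (m3 a11 a12 a13 a21 a22 a23 a31 a32 a33) =
   a11*a22*a33 + a12*a23*a31 + a13*a21*a32 - a11*a23*a32 - a12*a21*a33 - a13*a22*a31"
  by (simp add: det_3)

lemma m3_one: "(mat 1 :: mat3) = m3 1 0 0 0 1 0 0 0 1"
  by (simp add: vec_eq_iff forall_3 mat_def)

lemma m3_zero: "(0 :: mat3) = m3 0 0 0 0 0 0 0 0 0"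
  by (simp add: vec_eq_iff forall_3)




lemma matrix_inv_eq: "(A::mat3) ** B = mat 1 \<Longrightarrow> B ** A = mat 1 \<Longrightarrow> matrix_inv A = B"
proof -
  assume h: "A ** B = mat 1" "B ** A = mat 1"
  have "\<exists>A'. A ** A' = mat 1 \<and> A' ** A = mat 1" using h by blast
  hence m: "A ** matrix_inv A = mat 1 \<and> matrix_inv A ** A = mat 1"
    unfolding matrix_inv_def by (rule someI_ex)
  have "B = (matrix_inv A ** A) ** B" using m by (simp add: matrix_mul_lid)
  also have "\<dots> = matrix_inv A" by (simp add: matrix_mul_assoc[symmetric] h matrix_mul_rid)
  finally show ?thesis by simp
qed

definition cof3 :: "mat3 \<Rightarrow> mat3" where
  "cof3 M = (let a = M$1$1; b = M$1$2; c = M$1$3; d = M$2$1; e = M$2$2; f = M$2$3;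
     g = M$3$1; h = M$3$2; i = M$3$3 in
     m3 (e*i - f*h) (c*h - b*i) (b*f - c*e)
        (f*g - d*i) (a*i - c*g) (c*d - a*f)
        (d*h - e*g) (b*g - a*h) (a*e - b*d))"

definition inv3 :: "mat3 \<Rightarrow> mat3" where
  "inv3 M = (1 / det M) *\<^sub>R cof3 M"

lemma cof3_ok: "M ** cof3 M = det M *\<^sub>R mat 1" "cof3 M ** M = det M *\<^sub>R mat 1"
proof -
  obtain a b c d e f g h i where M: "M = m3 a b c d e f g h i"
    using m3_eta by blast
  show "M ** cof3 M = det M *\<^sub>R mat 1" "cof3 M ** M = det M *\<^sub>R mat 1"
    unfolding M cof3_def Let_def m3_one by (simp_all add: m3_det algebra_simps)
qed

lemma inv3_ok: assumes "det M \<noteq> 0" shows "M ** inv3 M = mat 1" "inv3 M ** M = mat 1"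
  unfolding inv3_def using assms
  by (simp_all add: matrix_scalar_ac scalar_matrix_assoc[symmetric] cof3_ok)

lemma matrix_inv_inv3: "det (M::mat3) \<noteq> 0 \<Longrightarrow> matrix_inv M = inv3 M"
  using inv3_ok matrix_inv_eq by blast




lemma mm_diff_l: "(A::mat3) ** (B - C) = A ** B - A ** C"
  by (simp add: vec_eq_iff matrix_matrix_mult_def sum_subtractf algebra_simps)
lemma mm_diff_r: "((A::mat3) - B) ** C = A ** C - B ** C"
  by (simp add: vec_eq_iff matrix_matrix_mult_def sum_subtractf algebra_simps)
lemma mm_add_l: "(A::mat3) ** (B + C) = A ** B + A ** C"
  by (simp add: vec_eq_iff matrix_matrix_mult_def sum.distrib algebra_simps)
lemma mm_add_r: "((A::mat3) + B) ** C = A ** C + B ** C"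
  by (simp add: vec_eq_iff matrix_matrix_mult_def sum.distrib algebra_simps)
lemma mm_scale_l: "(k *\<^sub>R (A::mat3)) ** B = k *\<^sub>R (A ** B)"
  by (simp add: vec_eq_iff matrix_matrix_mult_def sum_distrib_left algebra_simps)
lemma mm_scale_r: "(A::mat3) ** (k *\<^sub>R B) = k *\<^sub>R (A ** B)"
  by (simp add: vec_eq_iff matrix_matrix_mult_def sum_distrib_left algebra_simps)
lemma mm_neg_l: "(- (A::mat3)) ** B = - (A ** B)"
  by (simp add: vec_eq_iff matrix_matrix_mult_def sum_negf)
lemma mm_neg_r: "(A::mat3) ** (- B) = - (A ** B)"
  by (simp add: vec_eq_iff matrix_matrix_mult_def sum_negf)
lemma trace_scale: "trace (k *\<^sub>R (A::mat3)) = k * trace A"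
  by (simp add: trace_def sum_distrib_left)
lemma trace_neg: "trace (- (A::mat3)) = - trace A"
  by (simp add: trace_def sum_negf)

lemma tendsto_mmult:
  fixes X Y :: "'a \<Rightarrow> mat3"
  assumes "(X \<longlongrightarrow> X0) F" "(Y \<longlongrightarrow> Y0) F"
  shows "((\<lambda>t. X t ** Y t) \<longlongrightarrow> X0 ** Y0) F"
  unfolding matrix_matrix_mult_def
  by (intro tendsto_vec_lambda tendsto_sum tendsto_mult tendsto_vec_nth assms)

lemma tendsto_trace:
  fixes X :: "'a \<Rightarrow> mat3"
  assumes "(X \<longlongrightarrow> X0) F"
  shows "((\<lambda>t. trace (X t)) \<longlongrightarrow> trace X0) F"
  unfolding trace_def
  by (intro tendsto_sum tendsto_vec_nth assms)

lemma tendsto_m3: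
  assumes "(f11 \<longlongrightarrow> a11) F" "(f12 \<longlongrightarrow> a12) F" "(f13 \<longlongrightarrow> a13) F"
    "(f21 \<longlongrightarrow> a21) F" "(f22 \<longlongrightarrow> a22) F" "(f23 \<longlongrightarrow> a23) F"
    "(f31 \<longlongrightarrow> a31) F" "(f32 \<longlongrightarrow> a32) F" "(f33 \<longlongrightarrow> a33) F"
  shows "((\<lambda>t. m3 (f11 t) (f12 t) (f13 t) (f21 t) (f22 t) (f23 t) (f31 t) (f32 t) (f33 t))
     \<longlongrightarrow> m3 a11 a12 a13 a21 a22 a23 a31 a32 a33) F"
proof (rule vec_tendstoI, rule vec_tendstoI)
  fix i j :: 3
  show "((\<lambda>t. m3 (f11 t) (f12 t) (f13 t) (f21 t) (f22 t) (f23 t) (f31 t) (f32 t) (f33 t) $ i $ j)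
     \<longlongrightarrow> m3 a11 a12 a13 a21 a22 a23 a31 a32 a33 $ i $ j) F"
    using exhaust_3[of i] exhaust_3[of j] assms by auto
qed

lemma det3_comp: "det (M::mat3) = M$1$1*M$2$2*M$3$3 + M$1$2*M$2$3*M$3$1 + M$1$3*M$2$1*M$3$2
   - M$1$1*M$2$3*M$3$2 - M$1$2*M$2$1*M$3$3 - M$1$3*M$2$2*M$3$1"
  by (subst m3_eta, subst m3_det) simp

lemma tendsto_det:
  fixes X :: "'a \<Rightarrow> mat3"
  assumes "(X \<longlongrightarrow> X0) F"
  shows "((\<lambda>t. det (X t)) \<longlongrightarrow> det X0) F"
  unfolding det3_comp
  by (intro tendsto_intros tendsto_vec_nth assms)

lemma tendsto_cof3:
  fixes X :: "'a \<Rightarrow> mat3"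
  assumes "(X \<longlongrightarrow> X0) F"
  shows "((\<lambda>t. cof3 (X t)) \<longlongrightarrow> cof3 X0) F"
  unfolding cof3_def Let_def
  by (intro tendsto_m3 tendsto_intros tendsto_vec_nth assms)

lemma tendsto_inv3:
  fixes X :: "'a \<Rightarrow> mat3"
  assumes "(X \<longlongrightarrow> X0) F" "det X0 \<noteq> 0"
  shows "((\<lambda>t. inv3 (X t)) \<longlongrightarrow> inv3 X0) F"
  unfolding inv3_def
  by (intro tendsto_intros tendsto_cof3 tendsto_det assms)

lemma dmetric_eq:
  assumes dP: "det P \<noteq> 0"
  shows "dmetric P A B C = -(1/4) * (trace (matrix_inv P ** A ** matrix_inv P ** B ** matrix_inv P ** C)
            + trace (matrix_inv P ** B ** matrix_inv P ** A ** matrix_inv P ** C))"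
proof -
  define N where "N = matrix_inv P"
  define M where "M t = P + t *\<^sub>R A" for t :: real
  define Nt where "Nt t = inv3 (M t)" for t
  define f where "f t = metric (M t) B C" for t
  define g where "g t = -(1/4) * (trace (Nt t ** A ** N ** B ** Nt t ** C) + trace (N ** B ** Nt t ** A ** N ** C))" for t
  have NP: "N = inv3 P" using dP matrix_inv_inv3 N_def by simp
  have M0: "M 0 = P" by (simp add: M_def)
  have Mlim: "(M \<longlongrightarrow> P) (at 0)" unfolding M_def
    by (rule tendsto_eq_intros | simp)+
  have detlim: "((\<lambda>t. det (M t)) \<longlongrightarrow> det P) (at 0)" by (rule tendsto_det[OF Mlim])
  have ev: "eventually (\<lambda>t. det (M t) \<noteq> 0) (at 0)"
    using tendsto_imp_eventually_ne[OF detlim dP] .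
  have Ntlim: "(Nt \<longlongrightarrow> N) (at 0)" unfolding Nt_def NP by (rule tendsto_inv3[OF Mlim dP])
  define G where "G = -(1/4) * (trace (N ** A ** N ** B ** N ** C) + trace (N ** B ** N ** A ** N ** C))"
  have glim: "(g \<longlongrightarrow> G) (at 0)"
    unfolding g_def G_def
    by (intro tendsto_intros tendsto_trace tendsto_mmult Ntlim tendsto_const)
  have N1: "N ** P = mat 1" "P ** N = mat 1" using inv3_ok[OF dP] NP by auto
  have ev2: "eventually (\<lambda>t. t \<noteq> 0 \<and> det (M t) \<noteq> 0) (at 0)"
    using ev by (simp add: eventually_at_filter eventually_conj_iff)
  have quot: "eventually (\<lambda>t. (f t - f 0) / (t - 0) = g t) (at 0)"
  proof (rule eventually_mono[OF ev2])
    fix t assume h: "t \<noteq> 0 \<and> det (M t) \<noteq> 0"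
    define n where "n = Nt t"
    have mi: "matrix_inv (M t) = n" unfolding n_def Nt_def using h matrix_inv_inv3 by simp
    have nM: "n ** M t = mat 1" unfolding n_def Nt_def using h inv3_ok by simp
    have X: "n - N = (-t) *\<^sub>R (n ** A ** N)"
    proof -
      have "n - N = n ** (P ** N) - (n ** M t) ** N" using N1 nM by simp
      also have "\<dots> = (n ** (P - M t)) ** N" by (simp add: matrix_mul_assoc mm_diff_l mm_diff_r)
      also have "P - M t = (-t) *\<^sub>R A" by (simp add: M_def)
      finally show ?thesis by (simp add: mm_scale_l mm_scale_r mm_neg_l mm_neg_r)
    qed
    have D: "n ** B ** n ** C - N ** B ** N ** C = (n - N) ** B ** n ** C + N ** B ** (n - N) ** C"
      by (simp add: mm_diff_r mm_diff_l algebra_simps)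
    have E: "(n - N) ** B ** n ** C + N ** B ** (n - N) ** C =
       (-t) *\<^sub>R (n ** A ** N ** B ** n ** C + N ** B ** n ** A ** N ** C)"
      unfolding X by (simp add: mm_scale_l mm_scale_r mm_neg_l mm_neg_r matrix_mul_assoc scaleR_add_right)
    have "f t - f 0 = (1/4) * (trace (n ** B ** n ** C) - trace (N ** B ** N ** C))"
      unfolding f_def metric_def mi using M0 N_def by (simp add: algebra_simps)
    also have "\<dots> = (1/4) * trace (n ** B ** n ** C - N ** B ** N ** C)" by (simp add: trace_sub)
    also have "\<dots> = (1/4) * ((-t) * (trace (n ** A ** N ** B ** n ** C) + trace (N ** B ** n ** A ** N ** C)))"
      unfolding D E by (simp add: trace_scale trace_add trace_neg)
    finally show "(f t - f 0) / (t - 0) = g t" unfolding g_def n_def using h by simp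
  qed
  have "(f has_field_derivative G) (at 0)"
    unfolding has_field_derivative_iff
    using glim quot by (simp add: tendsto_cong)
  hence "deriv f 0 = G" by (rule DERIV_imp_deriv)
  thus ?thesis unfolding dmetric_def f_def M_def G_def N_def .
qed

lemma transpose_diff3: "transpose ((A::mat3) - B) = transpose A - transpose B"
  by (simp add: vec_eq_iff transpose_def)
lemma transpose_add3: "transpose ((A::mat3) + B) = transpose A + transpose B"
  by (simp add: vec_eq_iff transpose_def)
lemma transpose_neg3: "transpose (- (A::mat3)) = - transpose A"
  by (simp add: vec_eq_iff transpose_def)

lemma metric_diff: "metric P (X - Y) C = metric P X C - metric P Y C"
  unfolding metric_def by (simp add: mm_diff_l mm_diff_r trace_sub algebra_simps)

lemma transpose_inv_sym:
  assumes "det (P::mat3) \<noteq> 0" "transpose P = P"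
  shows "transpose (matrix_inv P) = matrix_inv P"
proof -
  have i: "P ** matrix_inv P = mat 1" "matrix_inv P ** P = mat 1"
    using inv3_ok[OF assms(1)] matrix_inv_inv3[OF assms(1)] by auto
  have "transpose (P ** matrix_inv P) = mat 1" "transpose (matrix_inv P ** P) = mat 1" using i by simp_all
  hence "transpose (matrix_inv P) ** P = mat 1" "P ** transpose (matrix_inv P) = mat 1"
    by (simp_all add: matrix_transpose_mul assms(2))
  hence "matrix_inv P = transpose (matrix_inv P)" using matrix_inv_eq by blast
  thus ?thesis by simp
qed

lemma christ_eq:
  assumes dP: "det P \<noteq> 0" and sP: "transpose P = P" and sA: "transpose A = A" and sB: "transpose B = B"
    and pd: "\<And>D. D \<in> sym_mats \<Longrightarrow> metric P D D = 0 \<Longrightarrow> D = 0"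
  shows "christ P A B = (-(1/2)) *\<^sub>R (A ** matrix_inv P ** B + B ** matrix_inv P ** A)"
proof -
  define N where "N = matrix_inv P"
  have sN: "transpose N = N" unfolding N_def by (rule transpose_inv_sym[OF dP sP])
  define Z where "Z = (-(1/2)) *\<^sub>R (A ** N ** B + B ** N ** A)"
  define K where "K Z \<longleftrightarrow> Z \<in> sym_mats \<and> (\<forall>C\<in>sym_mats.
      metric P Z C = (1/2) * (dmetric P A B C + dmetric P B A C - dmetric P C A B))" for Z
  have KZ: "K Z"
    unfolding K_def
  proof (intro conjI ballI)
    show "Z \<in> sym_mats" unfolding sym_mats_def Z_def
      by (simp add: transpose_neg3 transpose_scalar transpose_add3 matrix_transpose_mul sA sB sN matrix_mul_assoc add.commute)
    fix C :: mat3
    have c1: "trace (N ** C ** N ** A ** N ** B) = trace (N ** A ** N ** B ** N ** C)"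
      using trace_mul_sym[of "N ** C" "N ** A ** N ** B"] by (simp add: matrix_mul_assoc)
    have c2: "trace (N ** A ** N ** C ** N ** B) = trace (N ** B ** N ** A ** N ** C)"
      using trace_mul_sym[of "N ** A ** N ** C" "N ** B"] by (simp add: matrix_mul_assoc)
    show "metric P Z C = (1/2) * (dmetric P A B C + dmetric P B A C - dmetric P C A B)"
      unfolding dmetric_eq[OF dP] N_def[symmetric] metric_def Z_def c1 c2
      by (simp add: mm_scale_l mm_scale_r mm_add_l mm_add_r mm_diff_l mm_diff_r mm_neg_l mm_neg_r matrix_mul_assoc trace_scale trace_add trace_sub trace_neg algebra_simps)
  qed
  have "christ P A B = Z"
    unfolding christ_def K_def[symmetric]
  proof (rule the_equality[where P=K, OF KZ])
    fix Z' assume K': "K Z'"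
    have D: "Z' - Z \<in> sym_mats" using KZ K' unfolding K_def sym_mats_def by (simp add: transpose_diff3)
    have "metric P Z' (Z' - Z) = metric P Z (Z' - Z)"
      using KZ K' D unfolding K_def by (metis (no_types, lifting))
    hence "metric P (Z' - Z) (Z' - Z) = 0" unfolding metric_diff by simp
    thus "Z' = Z" using pd[OF D] by simp
  qed
  thus ?thesis unfolding Z_def N_def .
qed




lemma m3_mulv [simp]: "m3 a11 a12 a13 a21 a22 a23 a31 a32 a33 *v vector [x1, x2, x3] =
   vector [a11*x1 + a12*x2 + a13*x3, a21*x1 + a22*x2 + a23*x3, a31*x1 + a32*x2 + a33*x3]"
  by (simp add: vec_eq_iff forall_3 matrix_vector_mult_def sum_3)

lemma vec3_eq [simp]: "(vector [a, b, c] :: real^3) = vector [d, e, f] \<longleftrightarrow> a = d \<and> b = e \<and> c = f"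
  by (simp add: vec_eq_iff forall_3)

lemma br_vec [simp]: "r3_bracket (vector [x1, x2, x3]) (vector [y1, y2, y3]) =
   vector [0, x1*y2 - x2*y1, (x1*y2 - x2*y1) + (x1*y3 - x3*y1)]"
  by (simp add: r3_bracket_def Let_def)

lemma aut_form:
  assumes "\<alpha> \<noteq> 0"
  shows "r3_aut (m3 1 0 0 p \<alpha> 0 q \<beta> \<alpha>)"
  unfolding r3_aut_def
proof
  show "invertible (m3 1 0 0 p \<alpha> 0 q \<beta> \<alpha>)" unfolding invertible_det_nz m3_det using assms by simp
  show "\<forall>x y. m3 1 0 0 p \<alpha> 0 q \<beta> \<alpha> *v r3_bracket x y =
          r3_bracket (m3 1 0 0 p \<alpha> 0 q \<beta> \<alpha> *v x) (m3 1 0 0 p \<alpha> 0 q \<beta> \<alpha> *v y)"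
    unfolding forall_vector_3 by (simp add: algebra_simps)
qed

definition Lset :: "mat3 set" where
  "Lset = {M. M$1$2 = 0 \<and> M$1$3 = 0 \<and> M$2$3 = 0 \<and> M$2$2 = M$3$3}"

lemma aut_L:
  assumes "r3_aut \<phi>"
  shows "\<phi> \<in> Lset"
proof -
  obtain m11 m12 m13 m21 m22 m23 m31 m32 m33 where M: "\<phi> = m3 m11 m12 m13 m21 m22 m23 m31 m32 m33"
    using m3_eta by blast
  have inv: "invertible \<phi>" and br: "\<And>x y. \<phi> *v r3_bracket x y = r3_bracket (\<phi> *v x) (\<phi> *v y)"
    using assms unfolding r3_aut_def by auto
  have d: "det \<phi> \<noteq> 0" using inv invertible_det_nz by blast
  have e13: "\<phi> *v r3_bracket (vector [1,0,0]) (vector [0,0,1]) = r3_bracket (\<phi> *v vector [1,0,0]) (\<phi> *v vector [0,0,1])"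
    by (rule br)
  have e12: "\<phi> *v r3_bracket (vector [1,0,0]) (vector [0,1,0]) = r3_bracket (\<phi> *v vector [1,0,0]) (\<phi> *v vector [0,1,0])"
    by (rule br)
  have c1: "m13 = 0" using arg_cong[OF e13, of "\<lambda>v. v$1"] unfolding M by simp
  have c2: "m23 = m11*m23" using arg_cong[OF e13, of "\<lambda>v. v$2"] unfolding M c1 by simp
  have c3: "m33 = m11*m23 + m11*m33" using arg_cong[OF e13, of "\<lambda>v. v$3"] unfolding M c1 by simp
  have m12: "m12 = 0" using arg_cong[OF e12, of "\<lambda>v. v$1"] unfolding M c1 by simp
  have c5: "m22 + m23 = m11*m22" using arg_cong[OF e12, of "\<lambda>v. v$2"] unfolding M c1 m12 by simp
  have c6: "m32 + m33 = m11*m22 + m11*m32" using arg_cong[OF e12, of "\<lambda>v. v$3"] unfolding M c1 m12 by simp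
  have h13: "m13 = 0" "m23 = m11*m23 - m21*m13" "m33 = (m11*m23 - m21*m13) + (m11*m33 - m31*m13)"
    using c1 c2 c3 by simp_all
  have h12: "m12 + m13 = 0" "m22 + m23 = m11*m22 - m21*m12" "m32 + m33 = (m11*m22 - m21*m12) + (m11*m32 - m31*m12)"
    using c1 m12 c5 c6 by simp_all
  have dd: "m11*m22*m33 - m11*m23*m32 \<noteq> 0" using d unfolding M m3_det using h13 m12 by simp
  have m23: "m23 = 0"
  proof (rule ccontr)
    assume "m23 \<noteq> 0"
    hence "m11 = 1" using h13 by (metis mult_cancel_right1 mult_zero_left diff_zero)
    thus False using h13 \<open>m23 \<noteq> 0\<close> by simp
  qed
  have "m33 \<noteq> 0" using dd m23 by auto
  hence "m11 = 1" using h13 m23 by (metis mult_cancel_right1 mult_zero_left diff_zero add_0)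
  hence "m22 = m33" using h12 h13 m12 m23 by simp
  thus ?thesis unfolding Lset_def M using h13 m12 m23 by simp
qed

lemma RxAut_L: "M \<in> RxAut \<Longrightarrow> M \<in> Lset"
  unfolding RxAut_def using aut_L unfolding Lset_def by auto

lemma lin_zero:
  fixes ell :: "mat3 \<Rightarrow> real"
  assumes "bounded_linear ell" "\<And>t. ell (\<gamma> t) = 0" "(\<gamma> has_vector_derivative X) (at 0)"
  shows "ell X = 0"
proof -
  have "((\<lambda>t. ell (\<gamma> t)) has_vector_derivative ell X) (at 0)"
    by (rule bounded_linear.has_vector_derivative[OF assms(1) assms(3)])
  hence "((\<lambda>t. 0) has_vector_derivative ell X) (at 0)" using assms(2) by simp
  moreover have "((\<lambda>t. 0::real) has_vector_derivative 0) (at 0)" by (rule has_vector_derivative_const)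
  ultimately show ?thesis using vector_derivative_unique_at by blast
qed

lemma bl_entry: "bounded_linear (\<lambda>M::mat3. M $ i $ j)"
  by (simp add: bounded_linear_vec_nth bounded_linear_compose[OF bounded_linear_vec_nth bounded_linear_vec_nth])

lemma lie_alg_sub: "X \<in> lie_alg RxAut \<Longrightarrow> X \<in> Lset"
proof -
  assume "X \<in> lie_alg RxAut"
  then obtain \<gamma> where g: "\<And>t. \<gamma> t \<in> RxAut" "(\<gamma> has_vector_derivative X) (at 0)"
    unfolding lie_alg_def by blast
  have L: "\<And>t. \<gamma> t \<in> Lset" using g RxAut_L by blast
  have bl: "bounded_linear (\<lambda>M::mat3. M$2$2 - M$3$3)"
    by (intro bounded_linear_sub bl_entry)
  show ?thesis unfolding Lset_def
    using lin_zero[OF bl_entry _ g(2), of 1 2] lin_zero[OF bl_entry _ g(2), of 1 3]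
      lin_zero[OF bl_entry _ g(2), of 2 3] lin_zero[OF bl _ g(2)] L unfolding Lset_def by auto
qed



lemma gamma_eq: "(c::real) \<noteq> 0 \<Longrightarrow>
   c *\<^sub>R m3 1 0 0 0 0 0 0 0 0 + e *\<^sub>R m3 0 0 0 0 1 0 0 0 1 + t *\<^sub>R m3 0 0 0 x21 0 0 x31 x32 0
   = c *\<^sub>R m3 1 0 0 (t*x21/c) (e/c) 0 (t*x31/c) (t*x32/c) (e/c)"
  by simp

lemma lie_alg_sup: "X \<in> Lset \<Longrightarrow> X \<in> lie_alg RxAut"
proof -
  assume "X \<in> Lset"
  hence "X = m3 (X$1$1) 0 0 (X$2$1) (X$3$3) 0 (X$3$1) (X$3$2) (X$3$3)"
    unfolding Lset_def by (simp add: vec_eq_iff forall_3)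
  then obtain x11 x21 x22 x31 x32 where X: "X = m3 x11 0 0 x21 x22 0 x31 x32 x22" by blast
  define \<gamma> where "\<gamma> t = exp (t*x11) *\<^sub>R m3 1 0 0 0 0 0 0 0 0 + exp (t*x22) *\<^sub>R m3 0 0 0 0 1 0 0 0 1
      + t *\<^sub>R m3 0 0 0 x21 0 0 x31 x32 0" for t
  have "\<gamma> t \<in> RxAut" for t
  proof -
    define c where "c = exp (t*x11)"
    have c: "c \<noteq> 0" unfolding c_def by simp
    have g: "\<gamma> t = c *\<^sub>R m3 1 0 0 (t*x21/c) (exp (t*x22)/c) 0 (t*x31/c) (t*x32/c) (exp (t*x22)/c)"
      unfolding \<gamma>_def c_def[symmetric] using c by (rule gamma_eq)
    have r: "r3_aut (m3 1 0 0 (t*x21/c) (exp (t*x22)/c) 0 (t*x31/c) (t*x32/c) (exp (t*x22)/c))"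
      by (rule aut_form) (simp add: c)
    show ?thesis unfolding RxAut_def mem_Collect_eq g using c r by blast
  qed
  moreover have "\<gamma> 0 = mat 1" unfolding \<gamma>_def m3_one by simp
  moreover have "(\<gamma> has_vector_derivative X) (at 0)"
  proof -
    have d1: "((\<lambda>t. exp (t*x11)) has_field_derivative x11) (at 0)"
      by (auto intro!: derivative_eq_intros)
    have d2: "((\<lambda>t. exp (t*x22)) has_field_derivative x22) (at 0)"
      by (auto intro!: derivative_eq_intros)
    have d3: "((\<lambda>t. t) has_field_derivative 1) (at 0)" by (rule DERIV_ident)
    have "(\<gamma> has_vector_derivative (exp (0*x11) *\<^sub>R 0 + x11 *\<^sub>R m3 1 0 0 0 0 0 0 0 0)
         + (exp (0*x22) *\<^sub>R 0 + x22 *\<^sub>R m3 0 0 0 0 1 0 0 0 1)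
         + (0 *\<^sub>R 0 + 1 *\<^sub>R m3 0 0 0 x21 0 0 x31 x32 0)) (at 0)"
      unfolding \<gamma>_def
      by (intro has_vector_derivative_add has_vector_derivative_scaleR[OF d1 has_vector_derivative_const]
          has_vector_derivative_scaleR[OF d2 has_vector_derivative_const]
          has_vector_derivative_scaleR[OF d3 has_vector_derivative_const])
    thus ?thesis unfolding X by simp
  qed
  ultimately show ?thesis unfolding lie_alg_def by auto
qed




lemma fund_add: "fund (X + Y) Q = fund X Q + fund Y Q"
  unfolding fund_def by (simp add: vec_eq_iff transpose_def matrix_matrix_mult_def sum.distrib algebra_simps)
lemma fund_scale: "fund (c *\<^sub>R X) Q = c *\<^sub>R fund X Q"
  unfolding fund_def by (simp add: vec_eq_iff transpose_def matrix_matrix_mult_def sum_distrib_left algebra_simps)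
lemma fund_zero: "fund 0 Q = 0"
  unfolding fund_def by (simp add: vec_eq_iff transpose_def matrix_matrix_mult_def)

lemma fund_linear: "linear (fund X)"
  by (rule linearI) (simp_all add: fund_def vec_eq_iff transpose_def matrix_matrix_mult_def sum.distrib sum_distrib_left algebra_simps)

lemma fund_sym: "transpose Q = Q \<Longrightarrow> transpose (fund X Q) = fund X Q"
  unfolding fund_def by (simp add: transpose_neg3 transpose_add3 transpose_diff3 matrix_transpose_mul)

lemma cov_fund: "cov_deriv (fund X) Q V = fund X V + christ Q V (fund X Q)"
proof -
  have bl: "bounded_linear (fund X)" using fund_linear linear_conv_bounded_linear by blast
  have d: "(fund X has_derivative fund X) (at Q)" by (rule bounded_linear_imp_has_derivative[OF bl])
  have "(THE D. (fund X has_derivative D) (at Q)) = fund X"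
    by (rule the_equality[where P="\<lambda>D. (fund X has_derivative D) (at Q)", OF d]) (rule has_derivative_unique[OF _ d])
  thus ?thesis unfolding cov_deriv_def by simp
qed

lemma Lset_subspace: "subspace Lset"
  unfolding subspace_def Lset_def by simp

lemma T_subspace: "subspace {fund X Q | X. X \<in> Lset}"
  unfolding subspace_def
proof (intro conjI ballI allI)
  have "(0::mat3) \<in> Lset" unfolding Lset_def by simp
  thus "0 \<in> {fund X Q | X. X \<in> Lset}" using fund_zero[of Q] by (metis (mono_tags, lifting) mem_Collect_eq)
next
  fix x y assume "x \<in> {fund X Q | X. X \<in> Lset}" "y \<in> {fund X Q | X. X \<in> Lset}"
  then obtain X Y where h: "x = fund X Q" "y = fund Y Q" "X \<in> Lset" "Y \<in> Lset" by blast
  have "X + Y \<in> Lset" using h unfolding Lset_def by simp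
  moreover have "x + y = fund (X + Y) Q" using h fund_add by simp
  ultimately show "x + y \<in> {fund X Q | X. X \<in> Lset}" by blast
next
  fix c x assume "x \<in> {fund X Q | X. X \<in> Lset}"
  then obtain X where h: "x = fund X Q" "X \<in> Lset" by blast
  have "c *\<^sub>R X \<in> Lset" using h unfolding Lset_def by simp
  moreover have "c *\<^sub>R x = fund (c *\<^sub>R X) Q" using h fund_scale by simp
  ultimately show "c *\<^sub>R x \<in> {fund X Q | X. X \<in> Lset}" by blast
qed




lemma lie_alg_eq: "lie_alg RxAut = Lset"
  using lie_alg_sub lie_alg_sup by blast

lemma main_Q:
  fixes a b e :: real
  assumes a: "a > 0" and b: "b > 0" and e: "e > 0"
  shows "\<not> mean_curv_zero RxAut (m3 a 0 0 0 b 0 0 0 e)"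
proof
  assume mc: "mean_curv_zero RxAut (m3 a 0 0 0 b 0 0 0 e)"
  define Q where "Q = m3 a 0 0 0 b 0 0 0 e"
  define N where "N = m3 (1/a) 0 0 0 (1/b) 0 0 0 (1/e)"
  have invQ: "matrix_inv Q = N" unfolding Q_def N_def
    by (rule matrix_inv_eq) (use a b e in \<open>simp_all add: m3_one\<close>)
  have detQ: "det Q \<noteq> 0" unfolding Q_def m3_det using a b e by simp
  have symQ: "transpose Q = Q" unfolding Q_def by simp
  have pd: "\<And>D. D \<in> sym_mats \<Longrightarrow> metric Q D D = 0 \<Longrightarrow> D = 0"
  proof -
    fix D assume D: "D \<in> sym_mats" and z: "metric Q D D = 0"
    obtain d11 d12 d13 d21 d22 d23 d31 d32 d33 where DD: "D = m3 d11 d12 d13 d21 d22 d23 d31 d32 d33"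
      using m3_eta by blast
    have tD: "transpose D = D" using D unfolding sym_mats_def by simp
    have s: "d21 = d12" "d31 = d13" "d32 = d23"
      using arg_cong[OF tD, of "\<lambda>M. M$1$2"] arg_cong[OF tD, of "\<lambda>M. M$1$3"] arg_cong[OF tD, of "\<lambda>M. M$2$3"]
      unfolding DD by simp_all
    have "metric Q D D = (1/4) * (d11*d11/(a*a) + 2*(d12*d12)/(a*b) + 2*(d13*d13)/(a*e) + d22*d22/(b*b) + 2*(d23*d23)/(b*e) + d33*d33/(e*e))"
      unfolding metric_def invQ unfolding N_def DD s by simp
    hence z2: "d11*d11/(a*a) + 2*(d12*d12)/(a*b) + 2*(d13*d13)/(a*e) + d22*d22/(b*b) + 2*(d23*d23)/(b*e) + d33*d33/(e*e) = 0"
      using z by simp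
    have nn: "0 \<le> d11*d11/(a*a)" "0 \<le> 2*(d12*d12)/(a*b)" "0 \<le> 2*(d13*d13)/(a*e)" "0 \<le> d22*d22/(b*b)"
       "0 \<le> 2*(d23*d23)/(b*e)" "0 \<le> d33*d33/(e*e)" using a b e by (simp_all add: zero_le_divide_iff)
    have "d11*d11/(a*a) = 0" "2*(d12*d12)/(a*b) = 0" "2*(d13*d13)/(a*e) = 0" "d22*d22/(b*b) = 0"
       "2*(d23*d23)/(b*e) = 0" "d33*d33/(e*e) = 0" using z2 nn by linarith+
    hence "d11 = 0" "d12 = 0" "d13 = 0" "d22 = 0" "d23 = 0" "d33 = 0" using a b e by simp_all
    thus "D = 0" unfolding DD s m3_zero by simp
  qed
  define s2 where "s2 = sqrt (1/2)"
  define s3 where "s3 = sqrt (2*a/b)"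
  define s4 where "s4 = sqrt (2*a/e)"
  define s5 where "s5 = sqrt (2*b/e)"
  have s2sq: "s2 * s2 = 1/2" unfolding s2_def by simp
  have s3sq: "s3 * s3 = 2*a/b" unfolding s3_def using a b by simp
  have s4sq: "s4 * s4 = 2*a/e" unfolding s4_def using a e by simp
  have s5sq: "s5 * s5 = 2*b/e" unfolding s5_def using b e by simp
  define xs where "xs = [m3 1 0 0 0 0 0 0 0 0, m3 0 0 0 0 s2 0 0 0 s2, m3 0 0 0 s3 0 0 0 0 0,
     m3 0 0 0 0 0 0 s4 0 0, m3 0 0 0 0 0 0 0 s5 0]"
  have T: "orbit_tangent RxAut Q = {fund X Q | X. X \<in> Lset}"
    unfolding orbit_tangent_def lie_alg_eq ..
  have H1: "set xs \<subseteq> lie_alg RxAut" unfolding lie_alg_eq xs_def Lset_def by simp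
  have H3: "\<forall>i<length xs. \<forall>j<length xs.
             metric Q (fund (xs!i) Q) (fund (xs!j) Q) = (if i = j then 1 else 0)"
  proof (intro allI impI)
    fix i j assume "i < length xs" "j < length xs"
    hence "i < 5" "j < 5" by (simp_all add: xs_def)
    hence "i \<in> {0,1,2,3,4}" "j \<in> {0,1,2,3,4}" by auto
    thus "metric Q (fund (xs!i) Q) (fund (xs!j) Q) = (if i = j then 1 else 0)"
      unfolding xs_def metric_def invQ unfolding N_def fund_def Q_def using a b e
      by (auto simp: s2sq s3sq s4sq s5sq)
  qed
  have s2n: "s2 \<noteq> 0" and s3n: "s3 \<noteq> 0" and s4n: "s4 \<noteq> 0" and s5n: "s5 \<noteq> 0"
    using s2sq s3sq s4sq s5sq a b e by auto
  have H2: "span (set (map (\<lambda>X. fund X Q) xs)) = orbit_tangent RxAut Q"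
    unfolding T
  proof
    show "span (set (map (\<lambda>X. fund X Q) xs)) \<subseteq> {fund X Q |X. X \<in> Lset}"
      using H1 unfolding lie_alg_eq by (intro span_minimal T_subspace) auto
  next
    show "{fund X Q |X. X \<in> Lset} \<subseteq> span (set (map (\<lambda>X. fund X Q) xs))"
    proof
      fix v assume "v \<in> {fund X Q |X. X \<in> Lset}"
      then obtain X where v: "v = fund X Q" and XL: "X \<in> Lset" by blast
      have "X = m3 (X$1$1) 0 0 (X$2$1) (X$3$3) 0 (X$3$1) (X$3$2) (X$3$3)"
        using XL unfolding Lset_def by (simp add: vec_eq_iff forall_3)
      then obtain x11 x21 x22 x31 x32 where X: "X = m3 x11 0 0 x21 x22 0 x31 x32 x22" by blast
      have Xe: "X = x11 *\<^sub>R m3 1 0 0 0 0 0 0 0 0 + (x22/s2) *\<^sub>R m3 0 0 0 0 s2 0 0 0 s2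
          + (x21/s3) *\<^sub>R m3 0 0 0 s3 0 0 0 0 0 + (x31/s4) *\<^sub>R m3 0 0 0 0 0 0 s4 0 0
          + (x32/s5) *\<^sub>R m3 0 0 0 0 0 0 0 s5 0"
        unfolding X using s2n s3n s4n s5n by simp
      have "v = x11 *\<^sub>R fund (m3 1 0 0 0 0 0 0 0 0) Q + (x22/s2) *\<^sub>R fund (m3 0 0 0 0 s2 0 0 0 s2) Q
          + (x21/s3) *\<^sub>R fund (m3 0 0 0 s3 0 0 0 0 0) Q + (x31/s4) *\<^sub>R fund (m3 0 0 0 0 0 0 s4 0 0) Q
          + (x32/s5) *\<^sub>R fund (m3 0 0 0 0 0 0 0 s5 0) Q"
        unfolding v Xe by (simp only: fund_add fund_scale)
      thus "v \<in> span (set (map (\<lambda>X. fund X Q) xs))"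
        by (simp only:) (intro span_add span_mul span_base, simp_all add: xs_def)
    qed
  qed
  define S where "S = (\<Sum>X\<leftarrow>xs. cov_deriv (fund X) Q (fund X Q))"
  have np0: "normal_proj Q (orbit_tangent RxAut Q) S = 0"
    using mc H1 H2 H3 unfolding mean_curv_zero_def Q_def[symmetric] S_def by blast
  have cov: "\<And>X. cov_deriv (fund X) Q (fund X Q) = fund X (fund X Q) +
      (-(1/2)) *\<^sub>R (fund X Q ** N ** fund X Q + fund X Q ** N ** fund X Q)"
    using cov_fund christ_eq[OF detQ symQ fund_sym[OF symQ] fund_sym[OF symQ] pd] invQ by simp
  have Sval: "S = m3 (4*a) 0 0 0 0 0 0 0 (-4*e)"
    unfolding S_def xs_def cov unfolding fund_def Q_def N_def using a b e
    apply (simp add: s2sq s3sq s4sq s5sq)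
    by (simp add: algebra_simps s2sq s3sq s4sq s5sq)
  define n0 where "n0 = m3 0 0 0 0 (2*b) 0 0 0 (-2*e)"
  define K where "K n \<longleftrightarrow> S - n \<in> orbit_tangent RxAut Q \<and> (\<forall>v\<in>orbit_tangent RxAut Q. metric Q n v = 0)" for n
  have Tsym: "\<And>v. v \<in> orbit_tangent RxAut Q \<Longrightarrow> v \<in> sym_mats"
    unfolding T sym_mats_def using fund_sym[OF symQ] by auto
  have Kn0: "K n0"
    unfolding K_def
  proof (intro conjI ballI)
    have "S - n0 = fund (m3 (-2) 0 0 0 1 0 0 0 1) Q" unfolding Sval n0_def fund_def Q_def by simp
    moreover have "m3 (-2) 0 0 0 1 0 0 0 1 \<in> Lset" unfolding Lset_def by simp
    ultimately show "S - n0 \<in> orbit_tangent RxAut Q" unfolding T by blast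
  next
    fix v assume "v \<in> orbit_tangent RxAut Q"
    then obtain X where v: "v = fund X Q" and XL: "X \<in> Lset" unfolding T by blast
    have "X = m3 (X$1$1) 0 0 (X$2$1) (X$3$3) 0 (X$3$1) (X$3$2) (X$3$3)"
      using XL unfolding Lset_def by (simp add: vec_eq_iff forall_3)
    then obtain x11 x21 x22 x31 x32 where X: "X = m3 x11 0 0 x21 x22 0 x31 x32 x22" by blast
    show "metric Q n0 v = 0" unfolding v X metric_def invQ unfolding n0_def N_def fund_def Q_def
      using a b e by simp
  qed
  have uniq: "\<And>n. K n \<Longrightarrow> n = n0"
  proof -
    fix n assume Kn: "K n"
    have d: "n - n0 \<in> orbit_tangent RxAut Q"
    proof -
      have "(S - n0) - (S - n) \<in> orbit_tangent RxAut Q"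
      proof -
        have m1: "S - n0 \<in> {fund X Q |X. X \<in> Lset}" using Kn0 unfolding K_def T by blast
        have m2: "S - n \<in> {fund X Q |X. X \<in> Lset}" using Kn unfolding K_def T by blast
        show ?thesis unfolding T by (rule subspace_diff[OF T_subspace m1 m2])
      qed
      thus ?thesis by simp
    qed
    have "metric Q n (n - n0) = 0" "metric Q n0 (n - n0) = 0" using Kn Kn0 d unfolding K_def by auto
    hence "metric Q (n - n0) (n - n0) = 0" by (simp add: metric_diff)
    hence "n - n0 = 0" using pd Tsym[OF d] by blast
    thus "n = n0" by simp
  qed
  have "normal_proj Q (orbit_tangent RxAut Q) S = n0"
    unfolding normal_proj_def K_def[symmetric]
    by (rule the_equality[where P=K, OF Kn0 uniq])
  hence "n0 = 0" using np0 by simp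
  thus False unfolding n0_def m3_zero using b by simp
qed




lemma quad3: "vector [x1, x2, x3] \<bullet> (m3 a11 a12 a13 a21 a22 a23 a31 a32 a33 *v vector [x1, x2, x3]) =
   x1*(a11*x1 + a12*x2 + a13*x3) + x2*(a21*x1 + a22*x2 + a23*x3) + x3*(a31*x1 + a32*x2 + a33*x3)"
  by (simp add: inner_vec_def sum_3)

lemma vec3_nz: "(vector [x1, x2, x3] :: real^3) \<noteq> 0 \<longleftrightarrow> x1 \<noteq> 0 \<or> x2 \<noteq> 0 \<or> x3 \<noteq> 0"
  by (simp add: vec_eq_iff forall_3)

lemma normal_form:
  assumes pd: "posdef P"
  shows "\<exists>g a b e. g \<in> RxAut \<and> act g P = m3 a 0 0 0 b 0 0 0 e \<and> a > 0 \<and> b > 0 \<and> e > 0"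
proof -
  obtain p11 p12 p13 p21 p22 p23 p31 p32 p33 where PP: "P = m3 p11 p12 p13 p21 p22 p23 p31 p32 p33"
    using m3_eta by blast
  have tP: "transpose P = P" and qp: "\<And>x. x \<noteq> 0 \<Longrightarrow> x \<bullet> (P *v x) > 0" using pd unfolding posdef_def by auto
  have s: "p21 = p12" "p31 = p13" "p32 = p23"
    using arg_cong[OF tP, of "\<lambda>M. M$1$2"] arg_cong[OF tP, of "\<lambda>M. M$1$3"] arg_cong[OF tP, of "\<lambda>M. M$2$3"]
    unfolding PP by simp_all
  have P: "P = m3 p11 p12 p13 p12 p22 p23 p13 p23 p33" unfolding PP s ..
  have e: "p33 > 0" using qp[of "vector [0,0,1]"] unfolding P quad3 vec3_nz by simp
  define \<Delta> where "\<Delta> = p22*p33 - p23*p23"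
  have "0 < vector [0, p33, -p23] \<bullet> (P *v vector [0, p33, -p23])"
    using e by (intro qp) (simp add: vec3_nz)
  also have "\<dots> = p33 * \<Delta>" unfolding P quad3 \<Delta>_def by (simp add: algebra_simps)
  finally have D: "\<Delta> > 0" using e by (simp add: zero_less_mult_iff)
  define w where "w = - p23 / p33"
  define u where "u = (p13*p23 - p12*p33) / \<Delta>"
  define v where "v = (p12*p23 - p13*p22) / \<Delta>"
  define h where "h = m3 1 0 0 u 1 0 v w 1"
  define g where "g = m3 1 0 0 (-u) 1 0 (u*w - v) (-w) 1"
  have ig: "matrix_inv g = h" unfolding g_def h_def
    by (rule matrix_inv_eq) (simp_all add: m3_one)
  define A where "A = p11 + u*p12 + v * p13"
  have act: "act g P = m3 A 0 0 0 (\<Delta>/p33) 0 0 0 p33"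
    unfolding act_def ig unfolding h_def P A_def u_def v_def w_def \<Delta>_def using e D[unfolded \<Delta>_def]
    by (simp add: field_simps)
  have "0 < vector [1, u, v] \<bullet> (P *v vector [1, u, v])" by (intro qp) (simp add: vec3_nz)
  also have "\<dots> = (act g P) $ 1 $ 1" unfolding act_def ig h_def P quad3 by (simp add: algebra_simps)
  also have "\<dots> = A" unfolding act by simp
  finally have Apos: "A > 0" .
  have "g \<in> RxAut" unfolding RxAut_def g_def
    using aut_form[of 1 "-u" "u*w - v" "-w"] by force
  thus ?thesis using act Apos D e by (intro exI[of _ g] exI[of _ A] exI[of _ "\<Delta>/p33"] exI[of _ p33]) simp
qed



theorem proposition5p2:
  shows "\<forall>P. posdef P \<longrightarrow> \<not> minimal_orbit RxAut P"
proof (intro allI impI)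
  fix P assume "posdef P"
  then obtain g a b e where g: "g \<in> RxAut" "act g P = m3 a 0 0 0 b 0 0 0 e" "a > 0" "b > 0" "e > 0"
    using normal_form by blast
  have "m3 a 0 0 0 b 0 0 0 e \<in> orbit RxAut P" unfolding orbit_def using g(1,2) by force
  moreover have "\<not> mean_curv_zero RxAut (m3 a 0 0 0 b 0 0 0 e)" using main_Q g(3-5) by blast
  ultimately show "\<not> minimal_orbit RxAut P" unfolding minimal_orbit_def by blast
qed

end
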